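(* Let $\mathbf{v}=(v_1,\dots,v_d)\in\mathbb{R}^d$. Then $$\lim_{u\to\infty}\frac1u\int_{\Delta_d}\log\left(\frac1d\sum_{j=1}^d e^{ux_j+v_j}\right)d\mathbf{x}=\int_{\Delta_d}\max(\mathbf{x})\,d\mathbf{x}=\frac{1}{(d+1)!}\sum_{j=1}^d\frac1j.$$
   Context: $\Delta_d:=\{\mathbf{x}\in\mathbb{R}^d_{\ge0}:\sum_{j=1}^d x_j\le1\}$ is the standard $d$-simplex, and $\max(\mathbf{x}):=\max\{x_1,\dots,x_d\}$. *)

theory Defs
  imports "HOL-Analysis.Analysis"
begin

text \<open>Standard d-simplex in R^d, with d = CARD('n).\<close>
definition std_simplex :: "(real ^ 'n::finite) set" where
  "std_simplex = {x. (\<forall>i. 0 \<le> x $ i) \<and> (\<Sum>i\<in>UNIV. x $ i) \<le> 1}"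

definition vmax :: "real ^ 'n::finite \<Rightarrow> real" where
  "vmax x = Max (range (\<lambda>j. x $ j))"

end

theory Submission
  imports Defs
begin


definition U :: "'a set \<Rightarrow> 'a set \<Rightarrow> real \<Rightarrow> real \<Rightarrow> ('a \<Rightarrow> real) set" where
  "U A K t s = {x. (\<forall>i\<in>A. 0 \<le> x i) \<and> (\<forall>i\<in>K. s \<le> x i) \<and> sum x A \<le> t}"

lemma U_meas[measurable]:
  assumes "finite A" "K \<subseteq> A"
  shows "U A K t s \<inter> space (Pi\<^sub>M A (\<lambda>_. lborel)) \<in> sets (Pi\<^sub>M A (\<lambda>_. lborel))"
proof -
  have "U A K t s \<inter> space (Pi\<^sub>M A (\<lambda>_. lborel)) =
     {x \<in> space (Pi\<^sub>M A (\<lambda>_. lborel)). (\<forall>i\<in>A. 0 \<le> x i) \<and> (\<forall>i\<in>A. i \<in> K \<longrightarrow> s \<le> x i) \<and> sum x A \<le> t}"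
    using assms(2) by (auto simp: U_def)
  also have "\<dots> \<in> sets (Pi\<^sub>M A (\<lambda>_. lborel))"
  proof -
    have [measurable]: "(\<lambda>x. sum x A) \<in> borel_measurable (Pi\<^sub>M A (\<lambda>_. lborel))"
      using assms(1) by measurable
    show ?thesis
      using assms finite_subset[OF assms(2,1)] by measurable
  qed
  finally show ?thesis .
qed

lemma U_step:
  assumes "b \<notin> A" "finite A" "0 \<le> s"
  shows "x(b := y) \<in> U (insert b A) K t s \<longleftrightarrow>
          (if b \<in> K then s else 0) \<le> y \<and> x \<in> U A (K - {b}) (t - y) s"
proof -
  have 1: "(\<forall>i\<in>insert b A. 0 \<le> (x(b:=y)) i) \<longleftrightarrow> 0 \<le> y \<and> (\<forall>i\<in>A. 0 \<le> x i)"
    using assms(1) by auto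
  have 2: "(\<forall>i\<in>K. s \<le> (x(b:=y)) i) \<longleftrightarrow> (b \<in> K \<longrightarrow> s \<le> y) \<and> (\<forall>i\<in>K-{b}. s \<le> x i)"
    by auto
  have 3: "sum (x(b:=y)) (insert b A) = y + sum x A"
  proof -
    have "sum (x(b:=y)) A = sum x A" by (rule sum.cong) (use assms(1) in auto)
    then show ?thesis using assms(1,2) by simp
  qed
  show ?thesis unfolding U_def mem_Collect_eq 1 2 3 using assms(3) by auto
qed

lemma emeasure_U:
  fixes A :: "'a set"
  assumes "finite A" "K \<subseteq> A" "0 \<le> s"
  shows "emeasure (Pi\<^sub>M A (\<lambda>_. lborel)) (U A K t s \<inter> space (Pi\<^sub>M A (\<lambda>_. lborel))) =
     ennreal (if real (card K) * s \<le> t then (t - real (card K) * s) ^ card A / fact (card A) else 0)"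
  using assms(1,2)
proof (induction A arbitrary: K t rule: finite_induct)
  case empty
  then have K: "K = {}" by auto
  show ?case
  proof (cases "0 \<le> t")
    case True
    then have "U {} K t s \<inter> space (Pi\<^sub>M {} (\<lambda>_. lborel)) = {\<lambda>_. undefined}"
      by (auto simp: K U_def space_PiM)
    then show ?thesis using True K by (simp add: PiM_empty)
  next
    case False
    then have "U {} K t s \<inter> space (Pi\<^sub>M {} (\<lambda>_. lborel)) = {}"
      by (auto simp: K U_def space_PiM)
    then show ?thesis using False K by simp
  qed
next
  case (insert b A K t)
  let ?M = "\<lambda>A. (Pi\<^sub>M A (\<lambda>_. lborel :: real measure))"
  define n where "n = card A"
  define K' where "K' = K - {b}"
  define l where "l = (if b \<in> K then s else 0)"
  define c where "c = t - real (card K') * s"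
  have K': "K' \<subseteq> A" using insert.prems unfolding K'_def by auto
  have fK: "finite K" using insert.prems insert.hyps(1) finite_subset by blast
  have cardK: "real (card K) * s = real (card K') * s + l"
  proof (cases "b \<in> K")
    case True
    have "card K = Suc (card (K - {b}))" using card.remove[OF fK True] .
    then show ?thesis using True unfolding K'_def l_def by (simp add: algebra_simps)
  qed (simp add: K'_def l_def)
  have l0: "0 \<le> l" using assms(3) by (simp add: l_def)
  interpret product_sigma_finite "\<lambda>_. lborel"
    by standard
  have "emeasure (?M (insert b A)) (U (insert b A) K t s \<inter> space (?M (insert b A))) =
        nn_integral (?M (insert b A))
          (\<lambda>x. indicator (U (insert b A) K t s \<inter> space (?M (insert b A))) x)"
    using insert.hyps insert.prems by (subst nn_integral_indicator) (auto intro: U_meas)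
  also have "\<dots> = (\<integral>\<^sup>+ y. \<integral>\<^sup>+ x. indicator (U (insert b A) K t s \<inter> space (?M (insert b A)))
                    (x(b := y)) \<partial>?M A \<partial>lborel)"
    using insert.prems insert.hyps by (intro product_nn_integral_insert_rev) (auto intro: U_meas)
  also have "\<dots> = (\<integral>\<^sup>+ y. \<integral>\<^sup>+ x. indicator {l..} y * indicator (U A K' (t - y) s \<inter> space (?M A)) x
                    \<partial>?M A \<partial>lborel)"
    using insert.hyps insert.prems U_step[of b A s _ y K t for y] assms(3)
    by (intro nn_integral_cong)
       (auto simp: fun_eq_iff indicator_def space_PiM PiE_def extensional_def K'_def l_def)
  also have "\<dots> = (\<integral>\<^sup>+ y. indicator {l..} y * (\<integral>\<^sup>+ x. indicator (U A K' (t - y) s \<inter> space (?M A)) x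
                    \<partial>?M A) \<partial>lborel)"
    using insert.hyps K' by (subst nn_integral_cmult) (auto intro: U_meas)
  also have "\<dots> = (\<integral>\<^sup>+ y. indicator {l..} y * emeasure (?M A) (U A K' (t - y) s \<inter> space (?M A)) \<partial>lborel)"
    using insert.hyps K' by (subst nn_integral_indicator) (auto intro: U_meas)
  also have "\<dots> = (\<integral>\<^sup>+ y. ennreal ((c - y) ^ n / fact n) * indicator {l..c} y \<partial>lborel)"
    using insert.IH[OF K'] by (intro nn_integral_cong) (auto simp: indicator_def c_def n_def algebra_simps)
  also have "\<dots> = ennreal (if real (card K) * s \<le> t then (t - real (card K) * s) ^ card (insert b A) / fact (card (insert b A)) else 0)"
  proof (cases "l \<le> c")
    case True
    have "(\<integral>\<^sup>+ y. ennreal ((c - y) ^ n / fact n) * indicator {l..c} y \<partial>lborel)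
       = ennreal ((- ((c - c) ^ Suc n / fact (Suc n))) - (- ((c - l) ^ Suc n / fact (Suc n))))"
    proof (rule nn_integral_FTC_Icc)
      fix x assume "x \<in> {l..c}"
      show "((\<lambda>x. - ((c - x) ^ Suc n / fact (Suc n))) has_real_derivative (c - x) ^ n / fact n) (at x)"
        by (rule derivative_eq_intros refl | simp)+
      show "0 \<le> (c - x) ^ n / fact n" using \<open>x \<in> {l..c}\<close> by simp
    qed (use True in auto)
    also have "\<dots> = ennreal ((t - real (card K) * s) ^ card (insert b A) / fact (card (insert b A)))"
    proof -
      have e: "c - l = t - real (card K) * s" using cardK by (simp add: c_def)
      show ?thesis using insert.hyps by (simp only: e n_def card.insert) simp
    qed
    moreover have "real (card K) * s \<le> t" using True cardK by (simp add: c_def)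
    ultimately show ?thesis by simp
  next
    case False
    then have "{l..c} = {}" by auto
    moreover have "\<not> real (card K) * s \<le> t" using False cardK by (simp add: c_def)
    ultimately show ?thesis by simp
  qed
  finally show ?case .
qed


lemma t1: fixes k y :: real assumes "0 < k" shows "- ((real (Suc n) * y * (- k)) / (k * fact (Suc n))) = y / fact n"
proof -
  have p: "real (Suc n) * fact n > 0" by (simp add: fact_gt_zero)
  have "- ((real (Suc n) * y * (- k)) / (k * fact (Suc n))) = (k * (real (Suc n))) * y / ((k * (real (Suc n))) * fact n)"
    unfolding minus_divide_left fact_Suc by (simp add: algebra_simps)
  also have "\<dots> = y / fact n" using assms by (subst mult_divide_mult_cancel_left) auto
  finally show ?thesis .
qed

lemma nn_integral_Min:
  fixes A :: "'a set"
  assumes A: "finite A" and KA: "K \<subseteq> A" and Kne: "K \<noteq> {}"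
  shows "(\<integral>\<^sup>+x. indicator (U A {} 1 0 \<inter> space (Pi\<^sub>M A (\<lambda>_. lborel))) x * ennreal (Min (x ` K))
            \<partial>(Pi\<^sub>M A (\<lambda>_. lborel))) = ennreal (1 / (real (card K) * fact (Suc (card A))))"
proof -
  define M where "M = Pi\<^sub>M A (\<lambda>_. lborel :: real measure)"
  have fK: "finite K" using A KA finite_subset by blast
  define k where "k = real (card K)"
  have k0: "k > 0" using fK Kne by (simp add: k_def card_gt_0_iff)
  define n where "n = card A"
  define P where "P = (\<lambda>p::('a\<Rightarrow>real)\<times>real. (\<forall>i\<in>A. 0 \<le> fst p i) \<and> (\<forall>i\<in>A. i \<in> K \<longrightarrow> snd p \<le> fst p i) \<and> sum (fst p) A \<le> 1 \<and> 0 \<le> snd p)"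
  define g where "g = (\<lambda>x s. indicator {p \<in> space (M \<Otimes>\<^sub>M lborel). P p} (x,s) :: ennreal)"
  interpret PS: product_sigma_finite "\<lambda>_. lborel :: real measure" by standard
  interpret M: sigma_finite_measure M unfolding M_def by (rule PS.sigma_finite[OF A])
  interpret pair_sigma_finite M "lborel :: real measure" by standard
  have [measurable]: "(\<lambda>p. sum (fst p) A) \<in> borel_measurable (M \<Otimes>\<^sub>M lborel)"
    unfolding M_def using A by measurable
  have "Measurable.pred (M \<Otimes>\<^sub>M lborel) P"
    unfolding P_def M_def using A by measurable
  then have meas: "case_prod g \<in> borel_measurable (M \<Otimes>\<^sub>M lborel)"
    unfolding g_def by (simp add: pred_def)
  have pt: "(\<integral>\<^sup>+s. g x s \<partial>lborel) = indicator (U A {} 1 0 \<inter> space M) x * ennreal (Min (x ` K))"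
    if x: "x \<in> space M" for x
  proof (cases "x \<in> U A {} 1 0")
    case True
    have ge: "\<forall>i\<in>A. 0 \<le> x i" using True by (simp add: U_def)
    have m0: "0 \<le> Min (x ` K)" using ge KA fK Kne by (auto simp: Min_ge_iff)
    have "g x s = indicator {0..Min (x ` K)} s" for s
      using True x fK Kne KA unfolding g_def P_def
      by (auto simp: indicator_def U_def space_pair_measure Min_ge_iff)
    then have "(\<integral>\<^sup>+s. g x s \<partial>lborel) = (\<integral>\<^sup>+s. indicator {0..Min (x ` K)} s \<partial>lborel)" by simp
    also have "\<dots> = ennreal (Min (x ` K))" using m0 by simp
    finally show ?thesis using True x by simp
  next
    case False
    have "g x s = 0" for s
      using False x unfolding g_def P_def by (auto simp: indicator_def U_def space_pair_measure)
    then show ?thesis using False by simp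
  qed
  have inner: "(\<integral>\<^sup>+x. g x s \<partial>M) = ennreal ((1 - k * s) ^ n / fact n) * indicator {0..1/k} s" for s
  proof (cases "0 \<le> s")
    case True
    have "g x s = indicator (U A K 1 s \<inter> space M) x" if "x \<in> space M" for x
      using that True KA unfolding g_def P_def by (auto simp: indicator_def U_def space_pair_measure)
    then have "(\<integral>\<^sup>+x. g x s \<partial>M) = (\<integral>\<^sup>+x. indicator (U A K 1 s \<inter> space M) x \<partial>M)"
      by (intro nn_integral_cong) simp
    also have "\<dots> = emeasure M (U A K 1 s \<inter> space M)"
      unfolding M_def using A KA by (intro nn_integral_indicator U_meas)
    also have "\<dots> = ennreal (if k * s \<le> 1 then (1 - k * s) ^ n / fact n else 0)"
      unfolding M_def k_def n_def using emeasure_U[OF A KA True] by simp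
    also have "\<dots> = ennreal ((1 - k * s) ^ n / fact n) * indicator {0..1/k} s"
      using True k0 by (auto simp: indicator_def field_simps)
    finally show ?thesis .
  next
    case False
    then show ?thesis unfolding g_def P_def by (auto simp: indicator_def)
  qed
  have "(\<integral>\<^sup>+x. indicator (U A {} 1 0 \<inter> space M) x * ennreal (Min (x ` K)) \<partial>M)
      = (\<integral>\<^sup>+x. \<integral>\<^sup>+s. g x s \<partial>lborel \<partial>M)"
    by (intro nn_integral_cong) (simp add: pt)
  also have "\<dots> = (\<integral>\<^sup>+s. \<integral>\<^sup>+x. g x s \<partial>M \<partial>lborel)"
    using Fubini'[OF meas] by simp
  also have "\<dots> = (\<integral>\<^sup>+s. ennreal ((1 - k * s) ^ n / fact n) * indicator {0..1/k} s \<partial>lborel)"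
    by (simp add: inner)
  also have "\<dots> = ennreal ((- ((1 - k * (1/k)) ^ Suc n / (k * fact (Suc n)))) - (- ((1 - k * 0) ^ Suc n / (k * fact (Suc n)))))"
  proof (rule nn_integral_FTC_Icc)
    fix x assume x: "x \<in> {0..1/k}"
    show "((\<lambda>x. - ((1 - k * x) ^ Suc n / (k * fact (Suc n)))) has_real_derivative (1 - k * x) ^ n / fact n) (at x)"
    proof -
      have d: "((\<lambda>x. (1 - k * x) ^ Suc n) has_real_derivative (real (Suc n) * (1 - k * x) ^ n * (- k))) (at x)"
        by (rule derivative_eq_intros refl | simp)+
      have "((\<lambda>x. - ((1 - k * x) ^ Suc n / (k * fact (Suc n)))) has_real_derivative
              - ((real (Suc n) * (1 - k * x) ^ n * (- k)) / (k * fact (Suc n)))) (at x)"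
        by (intro DERIV_minus DERIV_cdivide d)
      moreover have "- ((real (Suc n) * (1 - k * x) ^ n * (- k)) / (k * fact (Suc n))) = (1 - k * x) ^ n / fact n"
        using t1[OF k0] .
      ultimately show ?thesis by simp
    qed
    have "k * x \<le> 1" using x k0 by (auto simp: field_simps)
    then show "0 \<le> (1 - k * x) ^ n / fact n" by simp
  qed (use k0 in auto)
  also have "\<dots> = ennreal (1 / (k * fact (Suc n)))" using k0 by simp
  finally show ?thesis unfolding M_def k_def n_def .
qed



lemma max_min_ie:
  fixes x :: "'a \<Rightarrow> real"
  assumes "finite A" "A \<noteq> {}"
  shows "Max (x ` A) = (\<Sum>K \<in> Pow A - {{}}. (-1) ^ (card K + 1) * Min (x ` K))"
  using assms
proof (induction A arbitrary: x rule: finite_ne_induct)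
  case (singleton a)
  have "Pow {a} - {{}} = {{a}}" by auto
  then show ?case by simp
next
  case (insert b A x)
  define y where "y = (\<lambda>i. min (x b) (x i))"
  define f where "f = (\<lambda>K. (-1::real) ^ (card K + 1) * Min (x ` K))"
  have fA: "finite (Pow A)" using insert.hyps by simp
  have "Max (x ` insert b A) = max (x b) (Max (x ` A))"
    using insert.hyps by simp
  also have "\<dots> = x b + Max (x ` A) - min (x b) (Max (x ` A))" by (simp add: max_def min_def)
  also have "min (x b) (Max (x ` A)) = Max (y ` A)"
    unfolding y_def using insert.hyps
    by (subst hom_Max_commute[where h = "min (x b)"]) (auto simp: image_image min_max_distrib1)
  also have "Max (y ` A) = (\<Sum>K \<in> Pow A - {{}}. (-1) ^ (card K + 1) * Min (y ` K))"
    by (rule insert.IH)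
  also have "\<dots> = (\<Sum>K \<in> Pow A - {{}}. - f (insert b K))"
  proof (rule sum.cong)
    fix K assume K: "K \<in> Pow A - {{}}"
    then have fK: "finite K" "K \<noteq> {}" "b \<notin> K" using insert.hyps finite_subset by auto
    have "min (x b) (Min (x ` K)) = Min (min (x b) ` (x ` K))"
      by (rule hom_Min_commute) (use fK in \<open>auto simp: min_def\<close>)
    then have "Min (y ` K) = min (x b) (Min (x ` K))"
      unfolding y_def by (simp add: image_image)
    also have "\<dots> = Min (x ` insert b K)" using fK by simp
    finally show "(-1) ^ (card K + 1) * Min (y ` K) = - f (insert b K)"
      unfolding f_def using fK by simp
  qed simp
  also have "Max (x ` A) = sum f (Pow A - {{}})" unfolding f_def by (rule insert.IH)
  finally have eq: "Max (x ` insert b A) = f {b} + sum f (Pow A - {{}}) + (\<Sum>K \<in> Pow A - {{}}. f (insert b K))"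
    by (simp add: f_def sum_negf)
  have u: "Pow (insert b A) - {{}} = (Pow A - {{}}) \<union> ({{b}} \<union> insert b ` (Pow A - {{}}))"
    by (auto simp: Pow_insert)
  have inj: "inj_on (insert b) (Pow A - {{}})"
    using insert.hyps by (auto simp: inj_on_def)
  have "sum f (Pow (insert b A) - {{}}) = sum f (Pow A - {{}}) + sum f ({{b}} \<union> insert b ` (Pow A - {{}}))"
    unfolding u using insert.hyps by (intro sum.union_disjoint) auto
  also have "sum f ({{b}} \<union> insert b ` (Pow A - {{}})) = f {b} + sum f (insert b ` (Pow A - {{}}))"
    using insert.hyps by (subst sum.union_disjoint) auto
  also have "sum f (insert b ` (Pow A - {{}})) = (\<Sum>K \<in> Pow A - {{}}. f (insert b K))"
    using sum.reindex[OF inj, of f] by (simp add: comp_def)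
  finally have "sum f (Pow (insert b A) - {{}}) = sum f (Pow A - {{}}) + (f {b} + (\<Sum>K \<in> Pow A - {{}}. f (insert b K)))" .
  then show ?case using eq unfolding f_def by simp
qed

lemma alt_choose_one:
  "(\<Sum>k\<le>n. (-1::real) ^ k * real (Suc n choose Suc k)) = 1"
proof -
  have "(\<Sum>i\<le>Suc n. (-1::real)^i * of_nat (Suc n choose i)) = 0"
    by (rule choose_alternating_sum) simp
  then have "1 + (\<Sum>i\<le>n. (-1::real)^Suc i * of_nat (Suc n choose Suc i)) = 0"
    by (simp only: sum.atMost_Suc_shift) simp
  then show ?thesis by (simp add: sum_negf)
qed

lemma harm_choose:
  "(\<Sum>k<n. (-1::real) ^ k * real (n choose Suc k) / real (Suc k)) = (\<Sum>k<n. 1 / real (Suc k))"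
proof (induction n)
  case 0
  then show ?case by simp
next
  case (Suc n)
  have "(\<Sum>k<Suc n. (-1::real) ^ k * real (Suc n choose Suc k) / real (Suc k))
      = (\<Sum>k<Suc n. (-1::real) ^ k * real (n choose k) / real (Suc k))
        + (\<Sum>k<Suc n. (-1::real) ^ k * real (n choose Suc k) / real (Suc k))"
    by (simp add: sum.distrib[symmetric] add_divide_distrib algebra_simps)
  also have "(\<Sum>k<Suc n. (-1::real) ^ k * real (n choose Suc k) / real (Suc k))
      = (\<Sum>k<n. (-1::real) ^ k * real (n choose Suc k) / real (Suc k))"
    by simp
  also have "\<dots> = (\<Sum>k<n. 1 / real (Suc k))" by (rule Suc.IH)
  also have "(\<Sum>k<Suc n. (-1::real) ^ k * real (n choose k) / real (Suc k))
      = (\<Sum>k<Suc n. (-1::real) ^ k * real (Suc n choose Suc k) / real (Suc n))"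
  proof (rule sum.cong)
    fix k
    have "real (Suc k) * real (Suc n choose Suc k) = real (Suc n) * real (n choose k)"
      using Suc_times_binomial[of k n] by (simp only: of_nat_mult[symmetric] of_nat_eq_iff)
    then have "real (n choose k) / real (Suc k) = real (Suc n choose Suc k) / real (Suc n)"
      by (simp del: binomial_Suc_Suc add: field_simps)
    then show "(-1::real) ^ k * real (n choose k) / real (Suc k) = (-1::real) ^ k * real (Suc n choose Suc k) / real (Suc n)"
      by (metis times_divide_eq_right)
  qed simp
  also have "\<dots> = (\<Sum>k\<le>n. (-1::real) ^ k * real (Suc n choose Suc k)) / real (Suc n)"
    by (simp add: sum_divide_distrib lessThan_Suc_atMost)
  also have "\<dots> = 1 / real (Suc n)" by (simp only: alt_choose_one)
  finally show ?case by simp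
qed

lemma sum_pow_card:
  fixes g :: "nat \<Rightarrow> real"
  assumes A: "finite A"
  shows "(\<Sum>K \<in> Pow A - {{}}. g (card K)) = (\<Sum>k\<in>{1..card A}. real (card A choose k) * g k)"
proof -
  have "(\<Sum>K \<in> Pow A - {{}}. g (card K)) =
        (\<Sum>k\<in>{1..card A}. \<Sum>K \<in> {K. K \<in> Pow A - {{}} \<and> card K = k}. g (card K))"
  proof (rule sum.group[symmetric])
    show "card ` (Pow A - {{}}) \<subseteq> {1..card A}"
      using A by (auto simp: card_mono Suc_le_eq card_gt_0_iff dest: finite_subset)
  qed (use A in auto)
  also have "\<dots> = (\<Sum>k\<in>{1..card A}. real (card A choose k) * g k)"
  proof (rule sum.cong)
    fix k assume k: "k \<in> {1..card A}"
    have "{K. K \<in> Pow A - {{}} \<and> card K = k} = {B. B \<subseteq> A \<and> card B = k}"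
      using k by auto
    then show "(\<Sum>K \<in> {K. K \<in> Pow A - {{}} \<and> card K = k}. g (card K)) = real (card A choose k) * g k"
      using n_subsets[OF A, of k] by simp
  qed simp
  finally show ?thesis .
qed

lemma harm_incl_excl:
  assumes A: "finite A"
  shows "(\<Sum>K \<in> Pow A - {{}}. (-1::real) ^ (card K + 1) * (1 / real (card K)))
         = (\<Sum>j = 1..card A. 1 / real j)"
proof -
  have "(\<Sum>K \<in> Pow A - {{}}. (-1::real) ^ (card K + 1) * (1 / real (card K)))
      = (\<Sum>k\<in>{1..card A}. real (card A choose k) * ((-1::real) ^ (k + 1) * (1 / real k)))"
    by (rule sum_pow_card[OF A])
  also have "\<dots> = (\<Sum>k<card A. (-1::real) ^ k * real (card A choose Suc k) / real (Suc k))"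
    by (simp add: sum.atLeast1_atMost_eq mult.commute)
  also have "\<dots> = (\<Sum>k<card A. 1 / real (Suc k))" by (rule harm_choose)
  also have "\<dots> = (\<Sum>j = 1..card A. 1 / real j)"
    by (simp add: sum.atLeast1_atMost_eq)
  finally show ?thesis .
qed


lemma max_integral_PiM:
  fixes A :: "'a set"
  assumes A: "finite A" "A \<noteq> {}"
  shows "has_bochner_integral (Pi\<^sub>M A (\<lambda>_. lborel))
           (\<lambda>x. indicator (U A {} 1 0 \<inter> space (Pi\<^sub>M A (\<lambda>_. lborel))) x * Max (x ` A))
           ((1 / fact (Suc (card A))) * (\<Sum>j = 1..card A. 1 / real j))"
proof -
  define M where "M = Pi\<^sub>M A (\<lambda>_. lborel :: real measure)"
  define S' where "S' = U A {} 1 0 \<inter> space M"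
  define n where "n = card A"
  have S'meas: "S' \<in> sets M" unfolding S'_def M_def using A(1) by (intro U_meas) auto
  have hK: "has_bochner_integral M (\<lambda>x. indicator S' x * Min (x ` K)) (1 / (real (card K) * fact (Suc n)))"
    if K: "K \<in> Pow A - {{}}" for K
  proof (rule has_bochner_integral_nn_integral)
    have fK: "finite K" using K A finite_subset by auto
    have [measurable]: "(\<lambda>x. Min ((\<lambda>i. x i) ` K)) \<in> borel_measurable M"
    proof -
      have KA: "K \<subseteq> A" using K by auto
      show ?thesis unfolding M_def using fK by measurable (insert KA, blast)
    qed
    show "(\<lambda>x. indicator S' x * Min (x ` K)) \<in> borel_measurable M"
      using S'meas by measurable
    have nn: "0 \<le> indicator S' x * Min (x ` K)" for x
      using K fK by (auto simp: indicator_def S'_def U_def Min_ge_iff)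
    show "AE x in M. 0 \<le> indicator S' x * Min (x ` K)" using nn by simp
    show "0 \<le> 1 / (real (card K) * fact (Suc n))" by simp
    have "(\<integral>\<^sup>+x. ennreal (indicator S' x * Min (x ` K)) \<partial>M)
        = (\<integral>\<^sup>+x. indicator S' x * ennreal (Min (x ` K)) \<partial>M)"
      by (intro nn_integral_cong) (auto simp: indicator_def)
    also have "\<dots> = ennreal (1 / (real (card K) * fact (Suc n)))"
      unfolding S'_def M_def n_def using nn_integral_Min[OF A(1), of K] K by auto
    finally show "(\<integral>\<^sup>+x. ennreal (indicator S' x * Min (x ` K)) \<partial>M) = ennreal (1 / (real (card K) * fact (Suc n)))" .
  qed
  have "has_bochner_integral M (\<lambda>x. \<Sum>K \<in> Pow A - {{}}. (-1) ^ (card K + 1) * (indicator S' x * Min (x ` K)))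
          (\<Sum>K \<in> Pow A - {{}}. (-1) ^ (card K + 1) * (1 / (real (card K) * fact (Suc n))))"
    by (intro has_bochner_integral_sum has_bochner_integral_mult_right hK)
  moreover have "(\<Sum>K \<in> Pow A - {{}}. (-1) ^ (card K + 1) * (indicator S' x * Min (x ` K))) = indicator S' x * Max (x ` A)" for x
    using max_min_ie[OF A, of x] by (simp add: sum_distrib_left algebra_simps)
  moreover have "(\<Sum>K \<in> Pow A - {{}}. (-1) ^ (card K + 1) * (1 / (real (card K) * fact (Suc n))))
     = (1 / fact (Suc n)) * (\<Sum>K \<in> Pow A - {{}}. (-1::real) ^ (card K + 1) * (1 / real (card K)))"
    by (simp add: sum_distrib_left mult.commute)
  ultimately show ?thesis
    using harm_incl_excl[OF A(1)] unfolding M_def S'_def n_def by simp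
qed


lemma Basis_cart_real: "(Basis :: (real^'n::finite) set) = range (\<lambda>i. axis i 1)"
  by (auto simp: Basis_vec_def)

lemma inj_axis1: "inj (\<lambda>i::'n::finite. axis i (1::real))"
  by (auto simp: inj_def axis_eq_axis)

lemma T_nth:
  fixes f :: "real^'n::finite \<Rightarrow> real"
  shows "(\<Sum>b\<in>Basis. f b *\<^sub>R b) $ i = f (axis i 1)"
proof -
  have "(\<Sum>b\<in>Basis. f b *\<^sub>R b) $ i = (\<Sum>b\<in>Basis. f b *\<^sub>R b) \<bullet> axis i 1"
    by (rule cart_eq_inner_axis)
  also have "\<dots> = (\<Sum>b\<in>Basis. f b * (b \<bullet> axis i 1))"
    by (simp add: inner_sum_left)
  also have "\<dots> = (\<Sum>b\<in>Basis. if b = axis i 1 then f b else 0)"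
    by (rule sum.cong) (auto simp: inner_Basis)
  also have "\<dots> = f (axis i 1)"
    by simp
  finally show ?thesis .
qed

lemma T_nth_fun:
  fixes f :: "real^'n::finite \<Rightarrow> real"
  shows "(($) (\<Sum>b\<in>Basis. f b *\<^sub>R b)) = (\<lambda>i. f (axis i 1))"
  by (rule ext) (rule T_nth)

lemma sum_Basis_cart:
  fixes f :: "real^'n::finite \<Rightarrow> real"
  shows "sum f Basis = (\<Sum>i\<in>UNIV. f (axis i 1))"
  unfolding Basis_cart_real by (subst sum.reindex[OF inj_axis1]) (simp add: comp_def)

lemma vmax_integral:
  "(vmax has_integral
            (1 / fact (CARD('n) + 1)) * (\<Sum>j = 1..CARD('n). 1 / real j)) (std_simplex :: (real ^ 'n::finite) set)"
proof -
  define M where "M = Pi\<^sub>M (Basis :: (real^'n) set) (\<lambda>_. lborel :: real measure)"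
  define T where "T = (\<lambda>f. \<Sum>b\<in>(Basis :: (real^'n) set). f b *\<^sub>R b)"
  define h where "h = (\<lambda>x::real^'n. indicator std_simplex x * vmax x)"
  define R where "R = (1 / fact (CARD('n) + 1)) * (\<Sum>j = 1..CARD('n). 1 / real j)"
  have cardB: "card (Basis :: (real^'n) set) = CARD('n)" by simp
  have Tm[measurable]: "T \<in> measurable M borel" unfolding T_def M_def by measurable
  have cl: "closed (std_simplex :: (real^'n) set)"
  proof -
    have "(std_simplex :: (real^'n) set) = (\<Inter>i. {x. 0 \<le> x $ i}) \<inter> {x. (\<Sum>i\<in>UNIV. x $ i) \<le> 1}"
      by (auto simp: std_simplex_def)
    also have "closed \<dots>"
      by (intro closed_Int closed_INT ballI closed_Collect_le continuous_intros)
    finally show ?thesis .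
  qed
  have vm: "vmax = (\<lambda>x::real^'n. Max ((\<lambda>j. x $ j) ` UNIV))" by (simp add: vmax_def fun_eq_iff)
  have vmm: "vmax \<in> borel_measurable (borel :: (real^'n) measure)"
  proof -
    have "(\<lambda>x::real^'n. Max ((\<lambda>j. x $ j) ` UNIV)) \<in> borel_measurable borel"
      by (rule borel_measurable_Max) auto
    then show ?thesis using vm by simp
  qed
  have hm[measurable]: "h \<in> borel_measurable borel"
    unfolding h_def using cl vmm by (intro borel_measurable_times borel_measurable_indicator borel_closed)
  have "has_bochner_integral M
           (\<lambda>x. indicator (U Basis {} 1 0 \<inter> space M) x * Max (x ` Basis)) R"
    using max_integral_PiM[of "Basis :: (real^'n) set"] unfolding M_def R_def by simp
  moreover have "indicator (U Basis {} 1 0 \<inter> space M) f * Max (f ` Basis) = h (T f)"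
    if f: "f \<in> space M" for f
  proof -
    have 1: "T f \<in> std_simplex \<longleftrightarrow> f \<in> U Basis {} 1 0"
      unfolding std_simplex_def U_def T_def
      by (simp only: T_nth T_nth_fun mem_Collect_eq sum_Basis_cart ball_empty) (simp add: Basis_cart_real)
    have 2: "vmax (T f) = Max (f ` Basis)"
      unfolding vmax_def T_def by (simp only: T_nth T_nth_fun) (simp add: Basis_cart_real image_image)
    show ?thesis using 1 2 f by (simp add: h_def indicator_def)
  qed
  ultimately have "has_bochner_integral M (\<lambda>f. h (T f)) R"
    by (subst (asm) has_bochner_integral_cong[OF refl _ refl]) auto
  then have ih: "integrable M (\<lambda>f. h (T f))" "integral\<^sup>L M (\<lambda>f. h (T f)) = R"
    by (auto simp: has_bochner_integral_iff)
  have lb: "lborel = distr M borel T" unfolding M_def T_def by (rule lborel_eq)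
  have "integrable lborel h" unfolding lb using ih(1) by (subst integrable_distr_eq) auto
  moreover have "integral\<^sup>L lborel h = R" unfolding lb using ih(2) by (subst integral_distr) auto
  ultimately have "(h has_integral R) UNIV" using has_integral_integral_real by metis
  moreover have "h = (\<lambda>x. if x \<in> std_simplex then vmax x else 0)"
    by (simp add: h_def indicator_def fun_eq_iff)
  ultimately have "((\<lambda>x::real^'n. if x \<in> std_simplex then vmax x else 0) has_integral R) UNIV"
    by simp
  then show ?thesis unfolding R_def has_integral_restrict_UNIV .
qed


lemma std_simplex_compact: "compact (std_simplex :: (real^'n::finite) set)"
proof -
  have "(std_simplex :: (real^'n) set) = (\<Inter>i. {x. 0 \<le> x $ i}) \<inter> {x. (\<Sum>i\<in>UNIV. x $ i) \<le> 1}"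
    by (auto simp: std_simplex_def)
  also have "closed \<dots>"
    by (intro closed_Int closed_INT ballI closed_Collect_le continuous_intros)
  finally have cl: "closed (std_simplex :: (real^'n) set)" .
  have "std_simplex \<subseteq> cbox (0::real^'n) 1"
  proof
    fix x :: "real^'n" assume x: "x \<in> std_simplex"
    have "x $ i \<le> 1" for i
    proof -
      have "x $ i \<le> (\<Sum>j\<in>UNIV. x $ j)"
        using x by (intro member_le_sum) (auto simp: std_simplex_def)
      then show ?thesis using x by (simp add: std_simplex_def)
    qed
    then show "x \<in> cbox 0 1" using x by (auto simp: std_simplex_def mem_box_cart)
  qed
  then have "bounded (std_simplex :: (real^'n) set)" by (rule bounded_subset[OF bounded_cbox])
  then show ?thesis using cl by (simp add: compact_eq_bounded_closed)
qed

lemma cont_integrable: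
  fixes f :: "real^'n::finite \<Rightarrow> real"
  assumes "continuous_on std_simplex f"
  shows "f integrable_on std_simplex"
proof -
  have K: "compact (std_simplex :: (real^'n) set)" by (rule std_simplex_compact)
  then have L: "(std_simplex :: (real^'n) set) \<in> lmeasurable" by (rule lmeasurable_compact)
  have "compact (f ` std_simplex)" by (rule compact_continuous_image[OF assms K])
  then obtain B where B: "\<And>x. x \<in> std_simplex \<Longrightarrow> norm (f x) \<le> B"
    using compact_imp_bounded bounded_iff by (metis imageI)
  have "f absolutely_integrable_on std_simplex"
  proof (rule measurable_bounded_by_integrable_imp_absolutely_integrable)
    show "f \<in> borel_measurable (lebesgue_on std_simplex)"
      using L by (intro continuous_imp_measurable_on_sets_lebesgue assms) auto
    show "(std_simplex :: (real^'n) set) \<in> sets lebesgue" by (rule fmeasurableD[OF L])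
    show "(\<lambda>x. B) integrable_on (std_simplex :: (real^'n) set)" using L by (rule integrable_on_const)
  qed (use B in auto)
  then show ?thesis by (simp add: absolutely_integrable_on_def)
qed

lemma pointwise_bound:
  fixes v x :: "real^'n::finite"
  assumes u: "0 \<le> u"
  shows "\<bar>ln ((1 / real CARD('n)) * (\<Sum>j\<in>UNIV. exp (u * x $ j + v $ j))) - u * vmax x\<bar>
         \<le> ln (real CARD('n)) + \<bar>Min (range (($) v))\<bar> + \<bar>Max (range (($) v))\<bar>"
proof -
  define d where "d = real CARD('n)"
  define m where "m = vmax x"
  define lo where "lo = Min (range (($) v))"
  define hi where "hi = Max (range (($) v))"
  define s where "s = (\<Sum>j\<in>UNIV. exp (u * x $ j + v $ j))"
  have d1: "1 \<le> d" unfolding d_def by (simp add: Suc_le_eq)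
  have "Max (range (($) x)) \<in> range (($) x)" by (rule Max_in) auto
  then obtain j0 where j0: "x $ j0 = m" unfolding m_def vmax_def by (metis rangeE)
  have xle: "x $ j \<le> m" for j unfolding m_def vmax_def by (rule Max_ge) auto
  have lo_le: "lo \<le> v $ j" for j unfolding lo_def by (rule Min_le) auto
  have hi_ge: "v $ j \<le> hi" for j unfolding hi_def by (rule Max_ge) auto
  have "exp (u * m + lo) \<le> exp (u * x $ j0 + v $ j0)" using j0 lo_le[of j0] by simp
  also have "\<dots> \<le> s" unfolding s_def by (rule member_le_sum) auto
  finally have s_lo: "exp (u * m + lo) \<le> s" .
  have "s \<le> (\<Sum>j\<in>(UNIV::'n set). exp (u * m + hi))" unfolding s_def
  proof (rule sum_mono)
    fix j
    have "u * x $ j \<le> u * m" using u xle[of j] by (rule mult_left_mono[rotated])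
    then show "exp (u * x $ j + v $ j) \<le> exp (u * m + hi)" using hi_ge[of j] by simp
  qed
  also have "\<dots> = d * exp (u * m + hi)" by (simp add: d_def)
  finally have s_hi: "s \<le> d * exp (u * m + hi)" .
  have spos: "0 < s" using s_lo by (metis exp_gt_zero less_le_trans)
  have "ln ((1 / d) * s) = ln s - ln d" using spos d1 by (simp add: ln_div)
  moreover have "u * m + lo \<le> ln s" using s_lo spos by (metis ln_exp ln_le_cancel_iff exp_gt_zero)
  moreover have "ln s \<le> ln d + (u * m + hi)"
  proof -
    have "ln s \<le> ln (d * exp (u * m + hi))" using s_hi spos by simp
    also have "\<dots> = ln d + (u * m + hi)" using d1 by (simp add: ln_mult)
    finally show ?thesis .
  qed
  moreover have "0 \<le> ln d" using d1 by simp
  ultimately show ?thesis unfolding d_def[symmetric] s_def[symmetric] m_def[symmetric] lo_def[symmetric] hi_def[symmetric]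
    by linarith
qed



theorem lemma7:
  fixes v :: "real ^ 'n::finite"
  shows "((\<lambda>u. (1 / u) * integral std_simplex
              (\<lambda>x. ln ((1 / real CARD('n)) * (\<Sum>j\<in>UNIV. exp (u * x $ j + v $ j)))))
           \<longlongrightarrow> integral (std_simplex :: (real ^ 'n) set) vmax) at_top
       \<and> (vmax has_integral
            (1 / fact (CARD('n) + 1)) * (\<Sum>j = 1..CARD('n). 1 / real j)) (std_simplex :: (real ^ 'n) set)"
proof
  show vI: "(vmax has_integral
            (1 / fact (CARD('n) + 1)) * (\<Sum>j = 1..CARD('n). 1 / real j)) (std_simplex :: (real ^ 'n) set)"
    by (rule vmax_integral)
  define S where "S = (std_simplex :: (real ^ 'n) set)"
  define F where "F = (\<lambda>u (x::real^'n). ln ((1 / real CARD('n)) * (\<Sum>j\<in>UNIV. exp (u * x $ j + v $ j))))"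
  define C where "C = ln (real CARD('n)) + \<bar>Min (range (($) v))\<bar> + \<bar>Max (range (($) v))\<bar>"
  define V where "V = integral S (\<lambda>x. C)"
  have vint: "vmax integrable_on S" using vI unfolding S_def by blast
  have Fint: "F u integrable_on S" for u
  proof -
    have "continuous_on S (F u)" unfolding F_def
    proof (intro continuous_intros ballI)
      fix x :: "real^'n"
      have "0 < (\<Sum>j\<in>UNIV. exp (u * x $ j + v $ j))" by (rule sum_pos) auto
      then show "(1 / real CARD('n)) * (\<Sum>j\<in>UNIV. exp (u * x $ j + v $ j)) \<noteq> 0" by simp
    qed
    then show ?thesis unfolding S_def by (rule cont_integrable)
  qed
  have Cint: "(\<lambda>x. C) integrable_on S" unfolding S_def by (rule cont_integrable) (rule continuous_on_const)
  have bound: "norm ((1 / u) * integral S (F u) - integral S vmax) \<le> V / u" if u: "0 < u" for u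
  proof -
    have vuint: "(\<lambda>x. u * vmax x) integrable_on S"
      using integrable_on_cmult_left[OF vint, of u] by simp
    have dint: "(\<lambda>x. F u x - u * vmax x) integrable_on S"
      using Fint vuint by (intro integrable_diff) auto
    have "(1 / u) * integral S (F u) - integral S vmax = (1 / u) * (integral S (F u) - u * integral S vmax)"
      using u by (simp add: field_simps)
    also have "integral S (F u) - u * integral S vmax = integral S (\<lambda>x. F u x - u * vmax x)"
      using Fint vuint by (subst integral_diff) auto
    finally have eq: "(1 / u) * integral S (F u) - integral S vmax = (1 / u) * integral S (\<lambda>x. F u x - u * vmax x)" .
    have "norm (integral S (\<lambda>x. F u x - u * vmax x)) \<le> integral S (\<lambda>x. C)"
    proof (rule Henstock_Kurzweil_Integration.integral_norm_bound_integral[OF dint Cint])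
      fix x assume "x \<in> S"
      show "norm (F u x - u * vmax x) \<le> C"
        unfolding F_def C_def using pointwise_bound[of u x v] u by simp
    qed
    then have "norm (integral S (\<lambda>x. F u x - u * vmax x)) \<le> V" by (simp add: V_def)
    then have "(1 / u) * norm (integral S (\<lambda>x. F u x - u * vmax x)) \<le> (1 / u) * V"
      using u by (intro mult_left_mono) auto
    then show ?thesis unfolding eq using u by (simp add: abs_mult)
  qed
  have "((\<lambda>u. (1 / u) * integral S (F u) - integral S vmax) \<longlongrightarrow> 0) at_top"
  proof (rule Lim_null_comparison)
    show "\<forall>\<^sub>F u in at_top. norm ((1 / u) * integral S (F u) - integral S vmax) \<le> V / u"
      using eventually_gt_at_top[of "0::real"] by eventually_elim (rule bound)
    show "((\<lambda>u. V / u) \<longlongrightarrow> 0) at_top"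
      by (intro tendsto_divide_0[OF tendsto_const] filterlim_at_top_imp_at_infinity filterlim_ident)
  qed
  then have "((\<lambda>u. (1 / u) * integral S (F u)) \<longlongrightarrow> integral S vmax) at_top"
    by (simp add: Lim_null[symmetric])
  then show "((\<lambda>u. (1 / u) * integral std_simplex
              (\<lambda>x. ln ((1 / real CARD('n)) * (\<Sum>j\<in>UNIV. exp (u * x $ j + v $ j)))))
           \<longlongrightarrow> integral (std_simplex :: (real ^ 'n) set) vmax) at_top"
    unfolding S_def F_def .
qed


end
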